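(* Let $\Sigma=(\mathbf{ex},\mathbf{fx},B)$ and $\Sigma'=(\mathbf{ex}',\mathbf{fx}',B')$ be seeds and $f:\mathcal A(\Sigma)\to\mathcal A(\Sigma')$ a rooted cluster morphism. Then: (1) the inclusion of the initial cluster of the image seed $f(\Sigma)$ into $\mathbf x'=\mathbf{ex}'\sqcup\mathbf{fx}'$ induces an injective rooted cluster morphism $\mathcal A(f(\Sigma))\to\mathcal A(\Sigma')$, so $\mathcal A(f(\Sigma))$ is a rooted cluster subalgebra of $\mathcal A(\Sigma')$; (2) if $f$ is ideal, then $f$ is the composition of a surjective rooted cluster morphism $\mathcal A(\Sigma)\to\mathcal A(f(\Sigma))$ and the injective rooted cluster morphism $\mathcal A(f(\Sigma))\to\mathcal A(\Sigma')$ of (1).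
   Context: A seed is a triple $\Sigma=(\mathbf{ex},\mathbf{fx},B)$ where $\mathbf{ex},\mathbf{fx}$ are disjoint finite or countable sets of indeterminates (exchangeable resp. frozen), $\mathbf x=\mathbf{ex}\sqcup\mathbf{fx}$, and $B=(b_{yz})_{y\in\mathbf x,z\in\mathbf{ex}}$ a locally finite integer matrix with skew-symmetrizable square part on $\mathbf{ex}\times\mathbf{ex}$. Mutation $\mu_x$ at $x\in\mathbf{ex}$: replace $x$ by $x'$ with $xx'=\prod_{b_{yx}>0}y^{b_{yx}}+\prod_{b_{yx}<0}y^{-b_{yx}}$, mutate $B$ by Fomin–Zelevinsky matrix mutation. $\mathcal A(\Sigma)$: $\Sigma$ with the $\mathbb Z$-subalgebra of $\mathbb Q(\mathbf x)$ generated by all cluster variables of seeds reachable by iterated mutations at exchangeable variables. A rooted cluster morphism $f:\mathcal A(\Sigma)\to\mathcal A(\Sigma')$ is a ring homomorphism with (CM1) $f(\mathbf{ex})\subseteq\mathbf{ex}'\sqcup\mathbb Z$, (CM2) $f(\mathbf{fx})\subseteq\mathbf x'\sqcup\mathbb Z$, (CM3) $f(\mu_{x_l}\circ\cdots\circ\mu_{x_1,\Sigma}(y))=\mu_{f(x_l)}\circ\cdots\circ\mu_{f(x_1),\Sigma'}(f(y))$ for all $y\in\mathbf x$ and all $\Sigma$-admissible mutation sequences whose image is $\Sigma'$-admissible (RHS read as $f(y)$ if $f(y)\in\mathbb Z$). Image seed: $f(\Sigma)=(\mathbf{ex}'\cap f(\mathbf{ex}),(\mathbf x'\cap f(\mathbf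 x))\setminus(\mathbf{ex}'\cap f(\mathbf{ex})),B'[\mathbf x'\cap f(\mathbf x)])$, where $B'[S]$ has rows indexed by $S$ and columns by $\mathbf{ex}'\cap f(\mathbf{ex})$. Always $\mathcal A(f(\Sigma))\subseteq f(\mathcal A(\Sigma))$; $f$ is ideal if equality holds. Rooted cluster subalgebra: source of an injective rooted cluster morphism. *)

theory Defs
  imports Complex_Main "HOL-Library.Poly_Mapping" "HOL-Library.Countable_Set"
begin

text \<open>Cluster variables are elements of an ambient field 'a of characteristic 0.
  The initial variables of a seed are required to be algebraically independent
  over Q, so that the subfield they generate is the field of rational functions Q(x).
  The exchange matrix B is a function on variables; only entries b_yz with
  y in ex union fx and z in ex are meaningful.\<close>

record 'a seed =
  exv :: "'a set"
  frv :: "'a set"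
  mat :: "'a \<Rightarrow> 'a \<Rightarrow> int"

definition allv :: "'a seed \<Rightarrow> 'a set" where
  "allv S = exv S \<union> frv S"

definition mono_eval :: "('a \<Rightarrow>\<^sub>0 nat) \<Rightarrow> 'a::field" where
  "mono_eval m = prod (\<lambda>v. v ^ Poly_Mapping.lookup m v) (Poly_Mapping.keys m)"

definition peval :: "(('a \<Rightarrow>\<^sub>0 nat) \<Rightarrow>\<^sub>0 int) \<Rightarrow> 'a::field" where
  "peval p = sum (\<lambda>m. of_int (Poly_Mapping.lookup p m) * mono_eval m) (Poly_Mapping.keys p)"

definition alg_indep :: "'a::field set \<Rightarrow> bool" where
  "alg_indep X \<longleftrightarrow>
     (\<forall>p::('a \<Rightarrow>\<^sub>0 nat) \<Rightarrow>\<^sub>0 int. (\<forall>m\<in>Poly_Mapping.keys p. Poly_Mapping.keys m \<subseteq> X) \<longrightarrow> peval p = 0 \<longrightarrow> p = 0)"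

definition locally_finite :: "'a seed \<Rightarrow> bool" where
  "locally_finite S \<longleftrightarrow>
     (\<forall>z\<in>exv S. finite {y\<in>allv S. mat S y z \<noteq> 0}) \<and>
     (\<forall>y\<in>allv S. finite {z\<in>exv S. mat S y z \<noteq> 0})"

definition skew_symmetrizable :: "'a seed \<Rightarrow> bool" where
  "skew_symmetrizable S \<longleftrightarrow>
     (\<exists>d::'a \<Rightarrow> int. (\<forall>x\<in>exv S. d x > 0) \<and>
        (\<forall>y\<in>exv S. \<forall>z\<in>exv S. d y * mat S y z = - (d z * mat S z y)))"

definition is_seed :: "'a::field_char_0 seed \<Rightarrow> bool" where
  "is_seed S \<longleftrightarrow> exv S \<inter> frv S = {} \<and> countable (exv S) \<and> countable (frv S) \<and>
     alg_indep (allv S) \<and> locally_finite S \<and> skew_symmetrizable S"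

definition new_var :: "'a::field seed \<Rightarrow> 'a \<Rightarrow> 'a" where
  "new_var S x =
     ((\<Prod>y\<in>{y\<in>allv S. mat S y x > 0}. y ^ nat (mat S y x)) +
      (\<Prod>y\<in>{y\<in>allv S. mat S y x < 0}. y ^ nat (- mat S y x))) / x"

text \<open>Fomin--Zelevinsky matrix mutation; the row/column of x is re-indexed by
  the new variable x'.\<close>
definition mut_mat :: "'a::field seed \<Rightarrow> 'a \<Rightarrow> 'a \<Rightarrow> 'a \<Rightarrow> int" where
  "mut_mat S x =
     (let x' = new_var S x; r = (\<lambda>v. if v = x' then x else v); B = mat S in
      (\<lambda>y z. let y0 = r y; z0 = r z in
         if y0 = x \<or> z0 = x then - B y0 z0
         else B y0 z0 + (\<bar>B y0 x\<bar> * B x z0 + B y0 x * \<bar>B x z0\<bar>) div 2))"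

definition mut :: "'a::field \<Rightarrow> 'a seed \<Rightarrow> 'a seed" where
  "mut x S = \<lparr> exv = insert (new_var S x) (exv S - {x}), frv = frv S, mat = mut_mat S x \<rparr>"

fun mutseq :: "'a::field list \<Rightarrow> 'a seed \<Rightarrow> 'a seed" where
  "mutseq [] S = S"
| "mutseq (x # xs) S = mutseq xs (mut x S)"

fun admissible :: "'a::field list \<Rightarrow> 'a seed \<Rightarrow> bool" where
  "admissible [] S = True"
| "admissible (x # xs) S = (x \<in> exv S \<and> admissible xs (mut x S))"

text \<open>track xs S y is the variable mu_{x_l} ... mu_{x_1,S}(y): the variable in the
  position of y after the mutation sequence.\<close>
fun track :: "'a::field list \<Rightarrow> 'a seed \<Rightarrow> 'a \<Rightarrow> 'a" where
  "track [] S y = y"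
| "track (x # xs) S y = track xs (mut x S) (if y = x then new_var S x else y)"

definition cluster_vars :: "'a::field seed \<Rightarrow> 'a set" where
  "cluster_vars S = (\<Union>xs\<in>{xs. admissible xs S}. allv (mutseq xs S))"

inductive_set clalg :: "'a::field seed \<Rightarrow> 'a set" for S where
  gen: "v \<in> cluster_vars S \<Longrightarrow> v \<in> clalg S"
| one: "1 \<in> clalg S"
| uminus: "a \<in> clalg S \<Longrightarrow> - a \<in> clalg S"
| add: "a \<in> clalg S \<Longrightarrow> b \<in> clalg S \<Longrightarrow> a + b \<in> clalg S"
| mult: "a \<in> clalg S \<Longrightarrow> b \<in> clalg S \<Longrightarrow> a * b \<in> clalg S"

definition ring_hom_on :: "'a::field set \<Rightarrow> 'b::field set \<Rightarrow> ('a \<Rightarrow> 'b) \<Rightarrow> bool" where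
  "ring_hom_on A A' f \<longleftrightarrow> f ` A \<subseteq> A' \<and> f 1 = 1 \<and>
     (\<forall>a\<in>A. \<forall>b\<in>A. f (a + b) = f a + f b \<and> f (a * b) = f a * f b)"

definition rooted_cluster_morphism ::
  "'a::field seed \<Rightarrow> 'b::field seed \<Rightarrow> ('a \<Rightarrow> 'b) \<Rightarrow> bool" where
  "rooted_cluster_morphism S S' f \<longleftrightarrow>
     ring_hom_on (clalg S) (clalg S') f \<and>
     (\<forall>x\<in>exv S. f x \<in> exv S' \<union> \<int>) \<and>
     (\<forall>x\<in>frv S. f x \<in> allv S' \<union> \<int>) \<and>
     (\<forall>xs y. admissible xs S \<longrightarrow> admissible (map f xs) S' \<longrightarrow> y \<in> allv S \<longrightarrow>
        f (track xs S y) = (if f y \<in> \<int> then f y else track (map f xs) S' (f y)))"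

definition image_seed :: "'a::field seed \<Rightarrow> 'b::field seed \<Rightarrow> ('a \<Rightarrow> 'b) \<Rightarrow> 'b seed" where
  "image_seed S S' f =
     (let E = exv S' \<inter> f ` exv S; X = allv S' \<inter> f ` allv S in
      \<lparr> exv = E, frv = X - E,
        mat = (\<lambda>y z. if y \<in> X \<and> z \<in> E then mat S' y z else 0) \<rparr>)"

definition ideal_morphism :: "'a::field seed \<Rightarrow> 'b::field seed \<Rightarrow> ('a \<Rightarrow> 'b) \<Rightarrow> bool" where
  "ideal_morphism S S' f \<longleftrightarrow> clalg (image_seed S S' f) = f ` clalg S"

end

theory Submission
  imports Defs
begin

abbreviation lk where "lk \<equiv> Poly_Mapping.lookup"
abbreviation ks where "ks \<equiv> Poly_Mapping.keys"

lemma mono_eval_superset: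
  assumes "finite K" "ks m \<subseteq> K"
  shows "mono_eval m = (\<Prod>v\<in>K. v ^ lk m v)"
  unfolding mono_eval_def
  by (rule prod.mono_neutral_left) (use assms in \<open>auto simp: in_keys_iff\<close>)

lemma keys_add_nat: "ks (a + b) = ks a \<union> ks (b :: 'a \<Rightarrow>\<^sub>0 nat)"
  by (auto simp: in_keys_iff lookup_add)

lemma mono_eval_add: "mono_eval (a + b) = (mono_eval a * mono_eval b :: 'a::field)"
proof -
  let ?K = "ks a \<union> ks b"
  have "mono_eval (a + b) = (\<Prod>v\<in>?K. v ^ lk (a+b) v)"
    by (rule mono_eval_superset) (auto simp: keys_add_nat)
  also have "\<dots> = (\<Prod>v\<in>?K. v ^ lk a v) * (\<Prod>v\<in>?K. v ^ lk b v)"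
    by (simp add: lookup_add power_add prod.distrib)
  also have "\<dots> = mono_eval a * mono_eval b"
    by (simp add: mono_eval_superset[symmetric])
  finally show ?thesis .
qed

lemma mono_eval_zero [simp]: "mono_eval 0 = 1"
  by (simp add: mono_eval_def)

lemma mono_eval_single [simp]: "mono_eval (Poly_Mapping.single v k) = (v::'a::field) ^ k"
  by (simp add: mono_eval_def)

lemma peval_superset:
  assumes "finite K" "ks p \<subseteq> K"
  shows "peval p = (\<Sum>m\<in>K. of_int (lk p m) * mono_eval m)"
  unfolding peval_def
  by (rule sum.mono_neutral_left) (use assms in \<open>auto simp: in_keys_iff\<close>)

lemma peval_add: "peval (p + q) = peval p + peval q"
proof -
  let ?K = "ks p \<union> ks q"
  have "peval (p + q) = (\<Sum>m\<in>?K. of_int (lk (p+q) m) * mono_eval m)"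
    by (rule peval_superset) (simp_all add: keys_add)
  also have "\<dots> = (\<Sum>m\<in>?K. of_int (lk p m) * mono_eval m) + (\<Sum>m\<in>?K. of_int (lk q m) * mono_eval m)"
    by (simp add: lookup_add distrib_right sum.distrib)
  also have "\<dots> = peval p + peval q"
    by (simp add: peval_superset[symmetric])
  finally show ?thesis .
qed

lemma peval_uminus: "peval (- p) = - peval p"
  unfolding peval_def by (simp add: sum_negf keys.rep_eq)

lemma peval_diff: "peval (p - q) = peval p - peval q"
  using peval_add[of p "-q"] by (simp add: peval_uminus)

lemma peval_zero [simp]: "peval 0 = 0"
  by (simp add: peval_def)

lemma peval_single [simp]: "peval (Poly_Mapping.single m c) = of_int c * mono_eval m"
  by (simp add: peval_def)

lemma peval_sum: "peval (sum g A) = (\<Sum>a\<in>A. peval (g a))"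
  by (induction A rule: infinite_finite_induct) (auto simp: peval_add)

definition pover :: "'a set \<Rightarrow> (('a \<Rightarrow>\<^sub>0 nat) \<Rightarrow>\<^sub>0 int) \<Rightarrow> bool" where
  "pover X p \<longleftrightarrow> (\<forall>m\<in>ks p. ks m \<subseteq> X)"

lemma alg_indepD: "alg_indep X \<Longrightarrow> pover X p \<Longrightarrow> peval p = 0 \<Longrightarrow> p = 0"
  unfolding alg_indep_def pover_def by blast

lemma alg_indep_mono: "alg_indep X \<Longrightarrow> Y \<subseteq> X \<Longrightarrow> alg_indep Y"
  unfolding alg_indep_def by blast

lemma pover_add: "pover X p \<Longrightarrow> pover X q \<Longrightarrow> pover X (p + q)"
  unfolding pover_def using keys_add[of p q] by blast

lemma pover_uminus: "pover X p \<Longrightarrow> pover X (- p)"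
  unfolding pover_def by (simp add: keys.rep_eq)

lemma pover_diff: "pover X p \<Longrightarrow> pover X q \<Longrightarrow> pover X (p - q)"
  by (metis diff_conv_add_uminus pover_add pover_uminus)

lemma pover_zero [simp]: "pover X 0"
  by (simp add: pover_def)

lemma pover_single: "ks m \<subseteq> X \<Longrightarrow> pover X (Poly_Mapping.single m c)"
  by (simp add: pover_def)

lemma pover_sum: "(\<And>a. a \<in> A \<Longrightarrow> pover X (g a)) \<Longrightarrow> pover X (sum g A)"
  by (induction A rule: infinite_finite_induct) (auto intro: pover_add)

lemma lookup_sum_single:
  "lk (\<Sum>a\<in>A. Poly_Mapping.single (k a) (v a)) m = (\<Sum>a\<in>A. if k a = m then v a else 0)"
  by (simp add: lookup_sum lookup_single when_def)

lemma not_int_var: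
  assumes "alg_indep X" "v \<in> X"
  shows "v \<notin> \<int>"
proof
  assume "v \<in> \<int>"
  then obtain k where k: "v = of_int k" by (auto elim: Ints_cases)
  let ?p = "Poly_Mapping.single (Poly_Mapping.single v (1::nat)) (1::int) - Poly_Mapping.single 0 k"
  have "pover X ?p" using assms(2) by (intro pover_diff pover_single) auto
  moreover have "peval ?p = 0" by (simp add: peval_diff k)
  ultimately have "?p = 0" using assms(1) alg_indepD by blast
  then have "lk ?p (Poly_Mapping.single v 1) = 0" by simp
  moreover have "Poly_Mapping.single v (1::nat) \<noteq> 0"
    by (metis lookup_single_eq lookup_zero one_neq_zero)
  ultimately show False by (simp add: lookup_minus lookup_single when_def)
qed

lemma var_nonzero: "alg_indep X \<Longrightarrow> v \<in> X \<Longrightarrow> v \<noteq> 0"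
  using not_int_var by fastforce


lemma mono_rep:
  assumes "finite A" "\<forall>y\<in>A. e y > (0::nat)"
  shows "\<exists>M. ks M = A \<and> mono_eval M = (\<Prod>y\<in>A. (y::'a::field) ^ e y)"
proof -
  define M where "M = (\<Sum>y\<in>A. Poly_Mapping.single y (e y))"
  have lk: "lk M z = (if z \<in> A then e z else 0)" for z
    unfolding M_def lookup_sum_single using assms(1) by (simp add: sum.delta)
  have k: "ks M = A" using assms(2) by (auto simp: in_keys_iff lk split: if_splits)
  have "mono_eval M = (\<Prod>v\<in>A. v ^ lk M v)" by (rule mono_eval_superset) (use assms k in auto)
  also have "\<dots> = (\<Prod>y\<in>A. y ^ e y)" by (rule prod.cong) (auto simp: lk)
  finally show ?thesis using k by blast
qed

lemma img_rep:
  assumes "finite A" "\<forall>y\<in>A. g y \<in> V \<union> \<int>"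
  shows "\<exists>c m. ks m \<subseteq> V \<inter> g ` A \<and> (\<Prod>y\<in>A. (g y::'a::field) ^ e y) = of_int c * mono_eval m"
  using assms
proof (induction A rule: finite_induct)
  case empty
  then show ?case by (intro exI[of _ 1] exI[of _ 0]) auto
next
  case (insert a A)
  then obtain c m where cm: "ks m \<subseteq> V \<inter> g ` A" "(\<Prod>y\<in>A. g y ^ e y) = of_int c * mono_eval m" by auto
  have P: "(\<Prod>y\<in>insert a A. g y ^ e y) = g a ^ e a * (of_int c * mono_eval m)"
    using insert cm by simp
  show ?case
  proof (cases "g a \<in> \<int>")
    case True
    then obtain k where k: "g a = of_int k" by (auto elim: Ints_cases)
    show ?thesis using cm P
      by (intro exI[of _ "k ^ e a * c"] exI[of _ m]) (auto simp: k)
  next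
    case False
    then have ga: "g a \<in> V" using insert by auto
    have "ks (m + Poly_Mapping.single (g a) (e a)) \<subseteq> V \<inter> g ` insert a A"
      using cm ga by (auto simp: keys_add_nat)
    moreover have "(\<Prod>y\<in>insert a A. g y ^ e y) = of_int c * mono_eval (m + Poly_Mapping.single (g a) (e a))"
      using P by (simp add: mono_eval_add)
    ultimately show ?thesis by blast
  qed
qed

lemma two_mono:
  assumes "alg_indep V" "ks M1 \<subseteq> V" "ks M2 \<subseteq> V" "ks m1 \<subseteq> V" "ks m2 \<subseteq> V"
    and "ks M1 \<inter> ks M2 = {}"
    and eq: "mono_eval M1 + mono_eval M2 = of_int c1 * mono_eval m1 + of_int c2 * (mono_eval m2 :: 'a::field)"
    and "y \<in> ks M1"
  shows "y \<in> ks m1 \<union> ks m2"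
proof -
  have ne: "M1 \<noteq> M2" using assms(6,8) by auto
  let ?r = "Poly_Mapping.single M1 1 + Poly_Mapping.single M2 1 - Poly_Mapping.single m1 c1 - Poly_Mapping.single m2 (c2::int)"
  have "pover V ?r" using assms by (intro pover_diff pover_add pover_single) auto
  moreover have "peval ?r = 0" using eq by (simp add: peval_diff peval_add)
  ultimately have "?r = 0" using assms(1) alg_indepD by blast
  then have "lk ?r M1 = 0" by simp
  then have "M1 = m1 \<or> M1 = m2" using ne
    by (auto simp: lookup_minus lookup_add lookup_single when_def split: if_splits)
  then show ?thesis using assms(8) by auto
qed

definition rem :: "'a \<Rightarrow> ('a \<Rightarrow>\<^sub>0 nat) \<Rightarrow> ('a \<Rightarrow>\<^sub>0 nat)" where
  "rem v m = Poly_Mapping.update v 0 m"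

lemma rem_split: "m = rem v m + Poly_Mapping.single v (lk m v)"
  by (rule poly_mapping_eqI) (simp add: rem_def lookup_add lookup_update lookup_single when_def)

lemma ks_rem: "ks (rem v m) = ks m - {v}"
  by (simp add: rem_def keys_update)

lemma lk_rem_v [simp]: "lk (rem v m) v = 0"
  by (simp add: rem_def lookup_update)

lemma mono_eval_rem: "mono_eval m = (v::'a::field) ^ lk m v * mono_eval (rem v m)"
  by (subst rem_split[of m v]) (simp add: mono_eval_add)

definition slice :: "'a \<Rightarrow> nat \<Rightarrow> (('a \<Rightarrow>\<^sub>0 nat) \<Rightarrow>\<^sub>0 int) \<Rightarrow> (('a \<Rightarrow>\<^sub>0 nat) \<Rightarrow>\<^sub>0 int)" where
  "slice v k p = (\<Sum>m\<in>{m\<in>ks p. lk m v = k}. Poly_Mapping.single (rem v m) (lk p m))"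

lemma peval_slices:
  "peval p = (\<Sum>k\<in>(\<lambda>m. lk m v) ` ks p. (v::'a::field) ^ k * peval (slice v k p))"
proof -
  have "peval p = (\<Sum>m\<in>ks p. of_int (lk p m) * mono_eval m)" by (simp add: peval_def)
  also have "\<dots> = (\<Sum>m\<in>ks p. v ^ lk m v * (of_int (lk p m) * mono_eval (rem v m)))"
  proof (rule sum.cong)
    fix m show "of_int (lk p m) * mono_eval m = v ^ lk m v * (of_int (lk p m) * mono_eval (rem v m))"
      by (subst mono_eval_rem[of m v]) (simp only: mult_ac)
  qed simp
  also have "\<dots> = (\<Sum>k\<in>(\<lambda>m. lk m v) ` ks p. \<Sum>m\<in>{m\<in>ks p. lk m v = k}. v ^ lk m v * (of_int (lk p m) * mono_eval (rem v m)))"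
    by (rule sum.group[symmetric]) auto
  also have "\<dots> = (\<Sum>k\<in>(\<lambda>m. lk m v) ` ks p. v ^ k * peval (slice v k p))"
    by (rule sum.cong) (auto simp: slice_def peval_sum sum_distrib_left)
  finally show ?thesis .
qed

lemma slice_pover: "pover (insert v Y) p \<Longrightarrow> pover Y (slice v k p)"
  unfolding slice_def by (intro pover_sum pover_single) (auto simp: pover_def ks_rem)

lemma slice_nz:
  assumes "m \<in> ks p"
  shows "slice v (lk m v) p \<noteq> 0"
proof -
  have "lk (slice v (lk m v) p) (rem v m) = (\<Sum>m'\<in>{m'\<in>ks p. lk m' v = lk m v}. if m' = m then lk p m else 0)"
    unfolding slice_def lookup_sum_single
  proof (rule sum.cong)
    fix m' assume "m' \<in> {m' \<in> ks p. lk m' v = lk m v}"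
    then have "lk m' v = lk m v" by auto
    then have "rem v m' = rem v m \<longleftrightarrow> m' = m"
      by (metis rem_split)
    then show "(if rem v m' = rem v m then lk p m' else 0) = (if m' = m then lk p m else 0)" by auto
  qed simp
  also have "\<dots> = lk p m" using assms by (simp add: sum.delta)
  finally show ?thesis using assms by (auto simp: in_keys_iff)
qed

definition shift :: "('a \<Rightarrow>\<^sub>0 nat) \<Rightarrow> (('a \<Rightarrow>\<^sub>0 nat) \<Rightarrow>\<^sub>0 int) \<Rightarrow> (('a \<Rightarrow>\<^sub>0 nat) \<Rightarrow>\<^sub>0 int)" where
  "shift M u = (\<Sum>m\<in>ks u. Poly_Mapping.single (m + M) (lk u m))"

lemma peval_shift: "peval (shift M u) = (mono_eval M :: 'a::field) * peval u"
proof -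
  have "peval (shift M u) = (\<Sum>m\<in>ks u. peval (Poly_Mapping.single (m + M) (lk u m)))"
    unfolding shift_def by (rule peval_sum)
  also have "\<dots> = (\<Sum>m\<in>ks u. mono_eval M * (of_int (lk u m) * mono_eval m))"
    by (simp add: mono_eval_add mult_ac)
  also have "\<dots> = mono_eval M * peval u"
    by (simp add: peval_def sum_distrib_left)
  finally show ?thesis .
qed

lemma pover_shift: "ks M \<subseteq> X \<Longrightarrow> pover X u \<Longrightarrow> pover X (shift M u)"
  unfolding shift_def by (intro pover_sum pover_single) (auto simp: pover_def keys_add_nat)

lemma add_right_inj_pm: "(m + M = m' + M) \<longleftrightarrow> m = (m' :: 'a \<Rightarrow>\<^sub>0 nat)"
proof
  assume h: "m + M = m' + M"
  show "m = m'"
  proof (rule poly_mapping_eqI)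
    fix z have "lk (m + M) z = lk (m' + M) z" using h by simp
    then show "lk m z = lk m' z" by (simp add: lookup_add)
  qed
qed simp

lemma lookup_shift:
  "lk (shift M u) m' = (\<Sum>m\<in>ks u. if m + M = m' then lk u m else 0)"
  unfolding shift_def lookup_sum_single by simp

lemma lookup_shift_eq: "lk (shift M u) (m0 + M) = lk u m0"
proof -
  have "lk (shift M u) (m0 + M) = (\<Sum>m\<in>ks u. if m = m0 then lk u m0 else 0)"
    unfolding lookup_shift by (rule sum.cong) (auto simp: add_right_inj_pm)
  also have "\<dots> = lk u m0" by (simp add: sum.delta in_keys_iff)
  finally show ?thesis .
qed


lemma mult_c:
  assumes "pover Y s" "ks M1 \<subseteq> Y" "ks M2 \<subseteq> Y"
  shows "\<exists>u. pover Y u \<and> peval u = ((mono_eval M1 + mono_eval M2 :: 'a::field) ^ k) * peval s"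
proof (induction k)
  case 0
  then show ?case using assms(1) by auto
next
  case (Suc k)
  then obtain u where u: "pover Y u" "peval u = ((mono_eval M1 + mono_eval M2 :: 'a) ^ k) * peval s" by blast
  have "pover Y (shift M1 u + shift M2 u)" using u assms by (intro pover_add pover_shift)
  moreover have "peval (shift M1 u + shift M2 u) = ((mono_eval M1 + mono_eval M2 :: 'a) ^ Suc k) * peval s"
    by (simp add: peval_add peval_shift u(2) algebra_simps)
  ultimately show ?case by blast
qed

lemma c_nonzero:
  assumes "alg_indep Y" "ks M1 \<subseteq> Y" "ks M2 \<subseteq> Y"
  shows "mono_eval M1 + mono_eval M2 \<noteq> (0::'a::field)"
proof
  assume h: "mono_eval M1 + mono_eval M2 = (0::'a)"
  let ?r = "Poly_Mapping.single M1 (1::int) + Poly_Mapping.single M2 1"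
  have "pover Y ?r" using assms by (intro pover_add pover_single) auto
  moreover have "peval ?r = (0::'a)" using h by (simp add: peval_add)
  ultimately have "?r = 0" using assms(1) alg_indepD by blast
  then have "lk ?r M1 = 0" by simp
  then show False by (simp add: lookup_add lookup_single when_def split: if_splits)
qed

lemma newvar_notin:
  fixes x :: "'a::field"
  assumes ai: "alg_indep (insert x Y)" and xY: "x \<notin> Y" and M: "ks M1 \<subseteq> Y" "ks M2 \<subseteq> Y"
    and xn: "x * n = mono_eval M1 + mono_eval M2"
  shows "n \<notin> insert x Y"
proof
  assume w: "n \<in> insert x Y"
  define m0 where "m0 = Poly_Mapping.single x (1::nat) + Poly_Mapping.single n 1"
  let ?r = "Poly_Mapping.single m0 (1::int) - Poly_Mapping.single M1 1 - Poly_Mapping.single M2 1"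
  have "pover (insert x Y) ?r" using M w
    by (intro pover_diff pover_single) (auto simp: m0_def keys_add_nat)
  moreover have "peval ?r = (0::'a)" using xn by (simp add: peval_diff m0_def mono_eval_add)
  ultimately have "?r = 0" using ai alg_indepD by blast
  then have "lk ?r m0 = 0" by simp
  moreover have "lk m0 x \<noteq> 0" by (simp add: m0_def lookup_add)
  moreover have "lk M1 x = 0" "lk M2 x = 0" using M xY by (auto simp: in_keys_iff)
  ultimately show False
    by (auto simp: lookup_minus lookup_single when_def split: if_splits)
qed

lemma keys_nonempty: "p \<noteq> 0 \<Longrightarrow> \<exists>m. m \<in> ks p"
  by (metis in_keys_iff lookup_zero poly_mapping_eqI)

lemma alg_mut:
  fixes x :: "'a::field"
  assumes ai: "alg_indep (insert x Y)" and xY: "x \<notin> Y" and M: "ks M1 \<subseteq> Y" "ks M2 \<subseteq> Y"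
    and c: "c = mono_eval M1 + mono_eval M2" and xnz: "x \<noteq> 0" and xn: "x * n = c"
  shows "alg_indep (insert n Y)"
  unfolding alg_indep_def
proof (intro allI impI)
  fix p :: "('a \<Rightarrow>\<^sub>0 nat) \<Rightarrow>\<^sub>0 int"
  assume pov0: "\<forall>m\<in>ks p. ks m \<subseteq> insert n Y" and pe: "peval p = 0"
  have pov: "pover (insert n Y) p" using pov0 by (simp add: pover_def)
  have aiY: "alg_indep Y" using ai alg_indep_mono by blast
  have cnz: "c \<noteq> 0" using c c_nonzero[OF aiY M] by simp
  show "p = 0"
  proof (rule ccontr)
    assume pnz: "p \<noteq> 0"
    define Ks where "Ks = (\<lambda>m. lk m n) ` ks p"
    have fK: "finite Ks" by (simp add: Ks_def)
    obtain m0 where m0: "m0 \<in> ks p" using keys_nonempty[OF pnz] by blast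
    define D where "D = Max Ks"
    have kD: "k \<le> D" if "k \<in> Ks" for k using that fK by (simp add: D_def)
    define s where "s k = slice n k p" for k
    have sov: "pover Y (s k)" for k unfolding s_def by (rule slice_pover[OF pov])
    define u where "u k = (SOME u. pover Y u \<and> peval u = c ^ k * peval (s k))" for k
    have u: "pover Y (u k) \<and> peval (u k) = c ^ k * peval (s k)" for k
      unfolding u_def c by (rule someI_ex) (rule mult_c[OF sov M])
    define q where "q = (\<Sum>k\<in>Ks. shift (Poly_Mapping.single x (D - k)) (u k))"
    have qov: "pover (insert x Y) q" unfolding q_def
      by (intro pover_sum pover_shift) (use u in \<open>auto simp: pover_def\<close>)
    have "peval q = (\<Sum>k\<in>Ks. x ^ (D - k) * (c ^ k * peval (s k)))"
      unfolding q_def by (simp add: peval_sum peval_shift u)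
    also have "\<dots> = (\<Sum>k\<in>Ks. x ^ D * (n ^ k * peval (s k)))"
    proof (rule sum.cong)
      fix k assume "k \<in> Ks"
      then have "D = (D - k) + k" using kD by simp
      then have "x ^ D * n ^ k = x ^ (D - k) * c ^ k"
        by (metis xn power_add power_mult_distrib mult.assoc)
      then show "x ^ (D - k) * (c ^ k * peval (s k)) = x ^ D * (n ^ k * peval (s k))"
        by (simp add: mult.assoc[symmetric])
    qed simp
    also have "\<dots> = x ^ D * peval p"
      by (simp add: peval_slices[of p n] Ks_def s_def sum_distrib_left)
    finally have "peval q = 0" using pe by simp
    then have q0: "q = 0" using ai qov alg_indepD by blast
    have uz: "u k = 0" if kK: "k \<in> Ks" for k
    proof (rule poly_mapping_eqI)
      fix m
      show "lk (u k) m = lk 0 m"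
      proof (cases "m \<in> ks (u k)")
        case False then show ?thesis by (simp add: in_keys_iff)
      next
        case True
        then have mY: "ks m \<subseteq> Y" using u by (auto simp: pover_def)
        then have mx: "lk m x = 0" using xY by (auto simp: in_keys_iff)
        have other: "lk (shift (Poly_Mapping.single x (D - k')) (u k')) (m + Poly_Mapping.single x (D - k)) = 0"
          if "k' \<in> Ks" "k' \<noteq> k" for k'
          unfolding lookup_shift
        proof (rule sum.neutral, intro ballI)
          fix m' assume m': "m' \<in> ks (u k')"
          then have "ks m' \<subseteq> Y" using u by (auto simp: pover_def)
          then have m'x: "lk m' x = 0" using xY by (auto simp: in_keys_iff)
          have "m' + Poly_Mapping.single x (D - k') \<noteq> m + Poly_Mapping.single x (D - k)"
          proof
            assume "m' + Poly_Mapping.single x (D - k') = m + Poly_Mapping.single x (D - k)"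
            then have "lk (m' + Poly_Mapping.single x (D - k')) x = lk (m + Poly_Mapping.single x (D - k)) x"
              by simp
            then have "D - k' = D - k" using m'x mx by (simp add: lookup_add)
            then show False using kD[OF that(1)] kD[OF kK] that(2) by simp
          qed
          then show "(if m' + Poly_Mapping.single x (D - k') = m + Poly_Mapping.single x (D - k) then lk (u k') m' else 0) = 0"
            by simp
        qed
        have "0 = lk q (m + Poly_Mapping.single x (D - k))" using q0 by simp
        also have "\<dots> = (\<Sum>k'\<in>Ks. lk (shift (Poly_Mapping.single x (D - k')) (u k')) (m + Poly_Mapping.single x (D - k)))"
          unfolding q_def by (simp add: lookup_sum)
        also have "\<dots> = lk (shift (Poly_Mapping.single x (D - k)) (u k)) (m + Poly_Mapping.single x (D - k))"
          by (rule sum.remove[OF fK kK, THEN trans]) (simp add: other)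
        also have "\<dots> = lk (u k) m" by (rule lookup_shift_eq)
        finally show ?thesis by simp
      qed
    qed
    have k0: "lk m0 n \<in> Ks" using m0 by (simp add: Ks_def)
    have "peval (u (lk m0 n)) = 0" using uz[OF k0] by simp
    then have "peval (s (lk m0 n)) = 0" using u cnz by simp
    then have "s (lk m0 n) = 0" using aiY sov alg_indepD by blast
    moreover have "s (lk m0 n) \<noteq> 0" unfolding s_def by (rule slice_nz[OF m0])
    ultimately show False by simp
  qed
qed


lemma skew_arith:
  fixes a b a' b' B B' dy dz dx :: int
  assumes "dx > 0" "dy > 0" "dz > 0" "dy * a = - (dx * b')" "dx * b = - (dz * a')" "dy * B = - (dz * B')"
  shows "dy * (B + (\<bar>a\<bar>*b + a*\<bar>b\<bar>) div 2) = - (dz * (B' + (\<bar>a'\<bar>*b' + a'*\<bar>b'\<bar>) div 2))"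
proof -
  have e1a: "dy * a * b = - (dx * b') * b" using assms(4) by simp
  have e1b: "dz * a' * b' = - (dx * b) * b'" using assms(5) by simp
  have e1: "dy * a * b = dz * a' * b'" using e1a e1b by (simp add: algebra_simps)
  have s1: "0 \<le> dy * a \<longleftrightarrow> 0 \<le> a" using assms(2) by (simp add: zero_le_mult_iff)
  have s2: "0 \<le> - (dx * b') \<longleftrightarrow> b' \<le> 0" using assms(1) by (simp add: mult_le_0_iff)
  have sa: "(a \<ge> 0) = (b' \<le> 0)" using s1 s2 assms(4) by simp
  have s3: "0 \<le> dx * b \<longleftrightarrow> 0 \<le> b" using assms(1) by (simp add: zero_le_mult_iff)
  have s4: "0 \<le> - (dz * a') \<longleftrightarrow> a' \<le> 0" using assms(3) by (simp add: mult_le_0_iff)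
  have sb: "(b \<ge> 0) = (a' \<le> 0)" using s3 s4 assms(5) by simp
  have za: "a = 0 \<longleftrightarrow> b' = 0" using assms(1,2,4) by auto
  have zb: "b = 0 \<longleftrightarrow> a' = 0" using assms(1,3,5) by auto
  consider "a \<ge> 0" "b \<ge> 0" | "a \<ge> 0" "b < 0" | "a < 0" "b \<ge> 0" | "a < 0" "b < 0" by linarith
  then show ?thesis
  proof cases
    case 1
    then have "b' \<le> 0" "a' \<le> 0" using sa sb by auto
    then have "\<bar>a'\<bar>*b' + a'*\<bar>b'\<bar> = 2 * (- (a' * b'))" "\<bar>a\<bar>*b + a*\<bar>b\<bar> = 2 * (a * b)"
      using 1 by (simp_all add: abs_of_nonpos abs_of_nonneg)
    then have "(\<bar>a'\<bar>*b' + a'*\<bar>b'\<bar>) div 2 = - (a' * b')" "(\<bar>a\<bar>*b + a*\<bar>b\<bar>) div 2 = a * b"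
      by simp_all
    then show ?thesis using e1 assms(6) by (simp add: algebra_simps)
  next
    case 2
    then have "b' \<le> 0" "a' > 0" using sa sb zb by auto
    then have "(\<bar>a'\<bar>*b' + a'*\<bar>b'\<bar>) div 2 = 0" "(\<bar>a\<bar>*b + a*\<bar>b\<bar>) div 2 = 0"
      using 2 by (simp_all add: abs_if)
    then show ?thesis using assms(6) by simp
  next
    case 3
    then have "b' > 0" "a' \<le> 0" using sa sb za by auto
    then have "(\<bar>a'\<bar>*b' + a'*\<bar>b'\<bar>) div 2 = 0" "(\<bar>a\<bar>*b + a*\<bar>b\<bar>) div 2 = 0"
      using 3 by (simp_all add: abs_if)
    then show ?thesis using assms(6) by simp
  next
    case 4
    then have "b' > 0" "a' > 0" using sa sb za zb by auto
    then have "(\<bar>a'\<bar>*b' + a'*\<bar>b'\<bar>) div 2 = a' * b'" "(\<bar>a\<bar>*b + a*\<bar>b\<bar>) div 2 = - (a * b)"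
      using 4 by (simp_all add: abs_if)
    then show ?thesis using e1 assms(6) by (simp add: algebra_simps)
  qed
qed


definition colfin :: "'a seed \<Rightarrow> bool" where
  "colfin T \<longleftrightarrow> (\<forall>z\<in>exv T. finite {y\<in>allv T. mat T y z \<noteq> 0})"

definition good :: "'a::field seed \<Rightarrow> bool" where
  "good T \<longleftrightarrow> exv T \<inter> frv T = {} \<and> alg_indep (allv T) \<and> colfin T \<and> skew_symmetrizable T"

lemma seed_good: "is_seed T \<Longrightarrow> good T"
  by (simp add: is_seed_def good_def colfin_def locally_finite_def)

lemma mut_simps [simp]:
  "exv (mut x S) = insert (new_var S x) (exv S - {x})"
  "frv (mut x S) = frv S"
  "mat (mut x S) = mut_mat S x"
  by (simp_all add: mut_def)

lemma mut_mat_eq: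
  "mut_mat S x y z =
    (let y0 = (if y = new_var S x then x else y); z0 = (if z = new_var S x then x else z) in
     if y0 = x \<or> z0 = x then - mat S y0 z0
     else mat S y0 z0 + (\<bar>mat S y0 x\<bar> * mat S x z0 + mat S y0 x * \<bar>mat S x z0\<bar>) div 2)"
  by (simp add: mut_mat_def Let_def)

lemma mat_diag:
  assumes "skew_symmetrizable T" "x \<in> exv T"
  shows "mat T x x = 0"
proof -
  obtain d where d: "\<forall>x\<in>exv T. d x > 0" "\<forall>y\<in>exv T. \<forall>z\<in>exv T. d y * mat T y z = - (d z * mat T z y)"
    using assms(1) unfolding skew_symmetrizable_def by blast
  have "d x * mat T x x = - (d x * mat T x x)" using d(2) assms(2) by blast
  then have "d x * mat T x x = 0" by simp
  moreover have "d x > 0" using d(1) assms(2) by blast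
  ultimately show ?thesis by simp
qed

lemma newvar_rep:
  assumes g: "good T" and x: "x \<in> exv T"
  shows "\<exists>M1 M2. ks M1 = {y\<in>allv T. mat T y x > 0} \<and> ks M2 = {y\<in>allv T. mat T y x < 0} \<and>
           x * new_var T x = mono_eval M1 + mono_eval M2"
proof -
  have fin: "finite {y\<in>allv T. mat T y x \<noteq> 0}" using g x by (simp add: good_def colfin_def)
  have f1: "finite {y\<in>allv T. mat T y x > 0}" by (rule finite_subset[OF _ fin]) auto
  have f2: "finite {y\<in>allv T. mat T y x < 0}" by (rule finite_subset[OF _ fin]) auto
  obtain M1 where M1: "ks M1 = {y\<in>allv T. mat T y x > 0}"
     "mono_eval M1 = (\<Prod>y\<in>{y\<in>allv T. mat T y x > 0}. y ^ nat (mat T y x))"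
    using mono_rep[OF f1, of "\<lambda>y. nat (mat T y x)"] by auto
  obtain M2 where M2: "ks M2 = {y\<in>allv T. mat T y x < 0}"
     "mono_eval M2 = (\<Prod>y\<in>{y\<in>allv T. mat T y x < 0}. y ^ nat (- mat T y x))"
    using mono_rep[OF f2, of "\<lambda>y. nat (- mat T y x)"] by auto
  have "x \<in> allv T" using x by (simp add: allv_def)
  then have "x \<noteq> 0" using g var_nonzero by (auto simp: good_def)
  then have "x * new_var T x = mono_eval M1 + mono_eval M2"
    by (simp add: new_var_def M1 M2)
  then show ?thesis using M1 M2 by blast
qed

lemma mut_good:
  assumes g: "good T" and x: "x \<in> exv T"
  shows "new_var T x \<notin> allv T \<and> good (mut x T)"
proof -
  let ?n = "new_var T x"
  define Y where "Y = allv T - {x}"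
  have xa: "x \<in> allv T" using x by (simp add: allv_def)
  have ins: "insert x Y = allv T" using xa Y_def by auto
  have xY: "x \<notin> Y" by (simp add: Y_def)
  have xf: "x \<notin> frv T" using g x by (auto simp: good_def)
  have ai: "alg_indep (allv T)" using g by (simp add: good_def)
  have sk: "skew_symmetrizable T" using g by (simp add: good_def)
  have cfT: "colfin T" using g by (simp add: good_def)
  have dg: "mat T x x = 0" by (rule mat_diag[OF sk x])
  obtain M1 M2 where M: "ks M1 = {y\<in>allv T. mat T y x > 0}" "ks M2 = {y\<in>allv T. mat T y x < 0}"
    "x * ?n = mono_eval M1 + mono_eval M2" using newvar_rep[OF g x] by blast
  have M1Y: "ks M1 \<subseteq> Y" using M dg by (auto simp: Y_def)
  have M2Y: "ks M2 \<subseteq> Y" using M dg by (auto simp: Y_def)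
  have xnz: "x \<noteq> 0" using var_nonzero ai xa by blast
  have nn: "?n \<notin> allv T" using newvar_notin[of x Y M1 M2 ?n] ai ins xY M1Y M2Y M(3) by simp
  have am: "allv (mut x T) = insert ?n Y" using xf by (auto simp: allv_def Y_def)
  have ai': "alg_indep (allv (mut x T))"
    unfolding am by (rule alg_mut[of x Y M1 M2 _ ?n]) (use ai ins xY M1Y M2Y M(3) xnz in auto)
  have disj: "exv (mut x T) \<inter> frv (mut x T) = {}" using g nn by (auto simp: good_def allv_def)
  have cf: "colfin (mut x T)"
    unfolding colfin_def
  proof
    fix z assume z: "z \<in> exv (mut x T)"
    define z0 where "z0 = (if z = ?n then x else z)"
    have z0: "z0 \<in> exv T" using z x by (auto simp: z0_def)
    have "{y\<in>allv (mut x T). mat (mut x T) y z \<noteq> 0} \<subseteq>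
          insert ?n ({y\<in>allv T. mat T y z0 \<noteq> 0} \<union> {y\<in>allv T. mat T y x \<noteq> 0})"
    proof
      fix y assume y: "y \<in> {y\<in>allv (mut x T). mat (mut x T) y z \<noteq> 0}"
      show "y \<in> insert ?n ({y\<in>allv T. mat T y z0 \<noteq> 0} \<union> {y\<in>allv T. mat T y x \<noteq> 0})"
      proof (cases "y = ?n")
        case False
        then have yY: "y \<in> Y" using y am by auto
        then have yx: "y \<noteq> x" "y \<in> allv T" by (auto simp: Y_def)
        have "mut_mat T x y z \<noteq> 0" using y by simp
        then have "mat T y z0 \<noteq> 0 \<or> mat T y x \<noteq> 0"
          using False yx by (auto simp: mut_mat_eq Let_def z0_def split: if_splits)
        then show ?thesis using yx by auto
      qed simp
    qed
    moreover have "finite {y\<in>allv T. mat T y z0 \<noteq> 0}" "finite {y\<in>allv T. mat T y x \<noteq> 0}"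
      using cfT z0 x by (auto simp: colfin_def)
    ultimately show "finite {y\<in>allv (mut x T). mat (mut x T) y z \<noteq> 0}"
      by (meson finite_Un finite_insert finite_subset)
  qed
  have sk': "skew_symmetrizable (mut x T)"
  proof -
    obtain d where d: "\<forall>x\<in>exv T. d x > 0" "\<forall>y\<in>exv T. \<forall>z\<in>exv T. d y * mat T y z = - (d z * mat T z y)"
      using sk unfolding skew_symmetrizable_def by blast
    define M where "M a b = (if a = x \<or> b = x then - mat T a b
        else mat T a b + (\<bar>mat T a x\<bar> * mat T x b + mat T a x * \<bar>mat T x b\<bar>) div 2)" for a b
    have key: "d a * M a b = - (d b * M b a)" if a: "a \<in> exv T" and b: "b \<in> exv T" for a b
    proof (cases "a = x \<or> b = x")
      case True
      have "d a * mat T a b = - (d b * mat T b a)" using d(2) a b by blast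
      moreover have "M a b = - mat T a b" "M b a = - mat T b a" using True by (auto simp: M_def)
      ultimately show ?thesis by simp
    next
      case False
      have e1: "d a * mat T a x = - (d x * mat T x a)" using d(2) a x by blast
      have e2: "d x * mat T x b = - (d b * mat T b x)" using d(2) b x by blast
      have e3: "d a * mat T a b = - (d b * mat T b a)" using d(2) a b by blast
      have p: "d x > 0" "d a > 0" "d b > 0" using d(1) a b x by blast+
      have "d a * (mat T a b + (\<bar>mat T a x\<bar> * mat T x b + mat T a x * \<bar>mat T x b\<bar>) div 2) =
            - (d b * (mat T b a + (\<bar>mat T b x\<bar> * mat T x a + mat T b x * \<bar>mat T x a\<bar>) div 2))"
        by (rule skew_arith[OF p e1 e2 e3])
      then show ?thesis using False by (auto simp: M_def)
    qed
    define d' where "d' = d(?n := d x)"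
    have r: "d' y = d (if y = ?n then x else y)" for y by (simp add: d'_def)
    have mm: "mut_mat T x y z = M (if y = ?n then x else y) (if z = ?n then x else z)" for y z
      by (simp add: mut_mat_eq M_def Let_def)
    have re: "(if y = ?n then x else y) \<in> exv T" if "y \<in> exv (mut x T)" for y
      using that x by auto
    show ?thesis unfolding skew_symmetrizable_def
    proof (intro exI[of _ d'] conjI ballI)
      fix y assume "y \<in> exv (mut x T)"
      then show "d' y > 0" using re d(1) r by metis
    next
      fix y z assume y: "y \<in> exv (mut x T)" and z: "z \<in> exv (mut x T)"
      show "d' y * mat (mut x T) y z = - (d' z * mat (mut x T) z y)"
        using key[OF re[OF y] re[OF z]] by (simp add: r mm)
    qed
  qed
  show ?thesis using nn disj ai' cf sk' by (simp add: good_def)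
qed

lemma good_mutseq: "good T \<Longrightarrow> admissible xs T \<Longrightarrow> good (mutseq xs T)"
  by (induction xs arbitrary: T) (auto dest: mut_good)


definition Rel :: "'a::field seed \<Rightarrow> 'a seed \<Rightarrow> bool" where
  "Rel T T' \<longleftrightarrow> exv T \<subseteq> exv T' \<and> frv T \<subseteq> allv T' \<and> exv T \<inter> frv T = {} \<and>
     (\<forall>y\<in>allv T. \<forall>z\<in>exv T. mat T y z = mat T' y z) \<and>
     (\<forall>z\<in>exv T. \<forall>y\<in>allv T'. mat T' y z \<noteq> 0 \<longrightarrow> y \<in> allv T)"

lemma Rel_allv: "Rel T T' \<Longrightarrow> allv T \<subseteq> allv T'"
  by (auto simp: Rel_def allv_def)

lemma Rel_newvar:
  assumes R: "Rel T T'" and x: "x \<in> exv T"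
  shows "new_var T x = new_var T' x"
proof -
  have sub: "allv T \<subseteq> allv T'" using Rel_allv[OF R] .
  have eq: "\<forall>y\<in>allv T. mat T y x = mat T' y x" using R x by (simp add: Rel_def)
  have nb: "\<forall>y\<in>allv T'. mat T' y x \<noteq> 0 \<longrightarrow> y \<in> allv T" using R x by (simp add: Rel_def)
  have s1: "{y\<in>allv T. mat T y x > 0} = {y\<in>allv T'. mat T' y x > 0}"
    using sub eq nb by fastforce
  have s2: "{y\<in>allv T. mat T y x < 0} = {y\<in>allv T'. mat T' y x < 0}"
    using sub eq nb by fastforce
  have p1: "(\<Prod>y\<in>{y\<in>allv T. mat T y x > 0}. y ^ nat (mat T y x)) = (\<Prod>y\<in>{y\<in>allv T'. mat T' y x > 0}. y ^ nat (mat T' y x))"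
    unfolding s1[symmetric] by (rule prod.cong) (use eq in auto)
  have p2: "(\<Prod>y\<in>{y\<in>allv T. mat T y x < 0}. y ^ nat (- mat T y x)) = (\<Prod>y\<in>{y\<in>allv T'. mat T' y x < 0}. y ^ nat (- mat T' y x))"
    unfolding s2[symmetric] by (rule prod.cong) (use eq in auto)
  show ?thesis unfolding new_var_def p1 p2 ..
qed

lemma Rel_mut:
  assumes R: "Rel T T'" and g: "good T'" and x: "x \<in> exv T"
  shows "Rel (mut x T) (mut x T')"
proof -
  let ?n = "new_var T x"
  have nv: "new_var T' x = ?n" using Rel_newvar[OF R x] by simp
  have x': "x \<in> exv T'" using R x by (auto simp: Rel_def)
  have nn: "?n \<notin> allv T'" using mut_good[OF g x'] nv by simp
  have sub: "allv T \<subseteq> allv T'" using Rel_allv[OF R] .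
  have dj: "exv T \<inter> frv T = {}" using R by (simp add: Rel_def)
  have dj': "exv T' \<inter> frv T' = {}" using g by (simp add: good_def)
  have eq: "\<And>a b. a \<in> allv T \<Longrightarrow> b \<in> exv T \<Longrightarrow> mat T a b = mat T' a b" using R by (simp add: Rel_def)
  have nb: "\<And>a b. b \<in> exv T \<Longrightarrow> a \<in> allv T' \<Longrightarrow> mat T' a b \<noteq> 0 \<Longrightarrow> a \<in> allv T" using R by (simp add: Rel_def)
  have xa: "x \<in> allv T" using x by (simp add: allv_def)
  have c1: "exv (mut x T) \<subseteq> exv (mut x T')" using R nv by (auto simp: Rel_def)
  have c2: "frv (mut x T) \<subseteq> allv (mut x T')" using R dj nv x by (auto simp: Rel_def allv_def)
  have c3: "exv (mut x T) \<inter> frv (mut x T) = {}" using dj nn sub by (auto simp: allv_def)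
  have c4: "\<forall>y\<in>allv (mut x T). \<forall>z\<in>exv (mut x T). mat (mut x T) y z = mat (mut x T') y z"
  proof (intro ballI)
    fix y z assume y: "y \<in> allv (mut x T)" and z: "z \<in> exv (mut x T)"
    define y0 where "y0 = (if y = ?n then x else y)"
    define z0 where "z0 = (if z = ?n then x else z)"
    have y0: "y0 \<in> allv T" using y xa by (auto simp: y0_def allv_def)
    have z0: "z0 \<in> exv T" using z x by (auto simp: z0_def)
    have A: "mut_mat T x y z = (if y0 = x \<or> z0 = x then - mat T y0 z0
       else mat T y0 z0 + (\<bar>mat T y0 x\<bar> * mat T x z0 + mat T y0 x * \<bar>mat T x z0\<bar>) div 2)"
      by (simp add: mut_mat_eq Let_def y0_def z0_def)
    have B: "mut_mat T' x y z = (if y0 = x \<or> z0 = x then - mat T' y0 z0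
       else mat T' y0 z0 + (\<bar>mat T' y0 x\<bar> * mat T' x z0 + mat T' y0 x * \<bar>mat T' x z0\<bar>) div 2)"
      by (simp add: mut_mat_eq Let_def y0_def z0_def nv)
    have "mat T y0 z0 = mat T' y0 z0" "mat T y0 x = mat T' y0 x" "mat T x z0 = mat T' x z0"
      using eq y0 z0 x xa by auto
    then show "mat (mut x T) y z = mat (mut x T') y z" using A B by simp
  qed
  have c5: "\<forall>z\<in>exv (mut x T). \<forall>y\<in>allv (mut x T'). mat (mut x T') y z \<noteq> 0 \<longrightarrow> y \<in> allv (mut x T)"
  proof (intro ballI impI)
    fix z y assume z: "z \<in> exv (mut x T)" and y: "y \<in> allv (mut x T')" and ne: "mat (mut x T') y z \<noteq> 0"
    show "y \<in> allv (mut x T)"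
    proof (rule ccontr)
      assume yn: "y \<notin> allv (mut x T)"
      have yn1: "y \<noteq> ?n" using yn by (auto simp: allv_def)
      have yT': "y \<in> allv T'" "y \<noteq> x" using y yn1 nv x' dj' by (auto simp: allv_def)
      have ynT: "y \<notin> allv T" using yn yT'(2) by (auto simp: allv_def)
      define z0 where "z0 = (if z = ?n then x else z)"
      have z0: "z0 \<in> exv T" using z x by (auto simp: z0_def)
      have m1: "mat T' y x = 0" using nb[OF x yT'(1)] ynT by blast
      have m2: "mat T' y z0 = 0" using nb[OF z0 yT'(1)] ynT by blast
      have B: "mut_mat T' x y z = (if y = x \<or> z0 = x then - mat T' y z0
         else mat T' y z0 + (\<bar>mat T' y x\<bar> * mat T' x z0 + mat T' y x * \<bar>mat T' x z0\<bar>) div 2)"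
        using yn1 by (simp add: mut_mat_eq Let_def z0_def nv)
      have "mut_mat T' x y z = 0" unfolding B using m1 m2 z0_def by auto
      then show False using ne by simp
    qed
  qed
  show ?thesis using c1 c2 c3 c4 c5 by (simp add: Rel_def)
qed

lemma Rel_seq:
  "Rel T T' \<Longrightarrow> good T' \<Longrightarrow> admissible xs T \<Longrightarrow>
    admissible xs T' \<and> Rel (mutseq xs T) (mutseq xs T') \<and> (\<forall>y\<in>allv T. track xs T y = track xs T' y)"
proof (induction xs arbitrary: T T')
  case Nil
  then show ?case by simp
next
  case (Cons x xs)
  have x: "x \<in> exv T" and ad: "admissible xs (mut x T)" using Cons.prems by auto
  have x': "x \<in> exv T'" using Cons.prems(1) x by (auto simp: Rel_def)
  have R': "Rel (mut x T) (mut x T')" by (rule Rel_mut[OF Cons.prems(1,2) x])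
  have g': "good (mut x T')" using mut_good[OF Cons.prems(2) x'] by simp
  have IH: "admissible xs (mut x T') \<and> Rel (mutseq xs (mut x T)) (mutseq xs (mut x T')) \<and>
      (\<forall>y\<in>allv (mut x T). track xs (mut x T) y = track xs (mut x T') y)"
    by (rule Cons.IH[OF R' g' ad])
  have nv: "new_var T' x = new_var T x" using Rel_newvar[OF Cons.prems(1) x] by simp
  have tr: "track (x # xs) T y = track (x # xs) T' y" if y: "y \<in> allv T" for y
  proof -
    have "(if y = x then new_var T x else y) \<in> allv (mut x T)"
      using y by (auto simp: allv_def)
    then show ?thesis using IH nv by simp
  qed
  show ?case using IH x' tr by simp
qed

lemma Rel_clalg:
  assumes R: "Rel T T'" and g: "good T'"
  shows "clalg T \<subseteq> clalg T'"
proof -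
  have cv: "cluster_vars T \<subseteq> cluster_vars T'"
  proof
    fix v assume "v \<in> cluster_vars T"
    then obtain xs where xs: "admissible xs T" "v \<in> allv (mutseq xs T)" by (auto simp: cluster_vars_def)
    have "admissible xs T'" "Rel (mutseq xs T) (mutseq xs T')" using Rel_seq[OF R g xs(1)] by auto
    then show "v \<in> cluster_vars T'" using xs(2) Rel_allv by (fastforce simp: cluster_vars_def)
  qed
  show ?thesis
  proof
    fix a assume "a \<in> clalg T"
    then show "a \<in> clalg T'"
      by induction (use cv in \<open>auto intro: clalg.intros\<close>)
  qed
qed


lemma clalg_pow: "a \<in> clalg S \<Longrightarrow> a ^ k \<in> clalg S"
  by (induction k) (auto intro: clalg.intros)

lemma hom_pow:
  assumes h: "ring_hom_on (clalg S) A f" and a: "a \<in> clalg S"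
  shows "f (a ^ k) = f a ^ k"
proof (induction k)
  case 0 then show ?case using h by (simp add: ring_hom_on_def)
next
  case (Suc k)
  have "f (a * a ^ k) = f a * f (a ^ k)" using h a clalg_pow[OF a] by (simp add: ring_hom_on_def)
  then show ?case using Suc by simp
qed

lemma hom_prod:
  assumes h: "ring_hom_on (clalg S) A f" and F: "finite F" "F \<subseteq> clalg S"
  shows "(\<Prod>y\<in>F. y ^ e y) \<in> clalg S \<and> f (\<Prod>y\<in>F. y ^ e y) = (\<Prod>y\<in>F. f y ^ e y)"
  using F
proof (induction F rule: finite_induct)
  case empty then show ?case using h by (simp add: ring_hom_on_def clalg.one)
next
  case (insert a F)
  then have a: "a \<in> clalg S" and IH: "(\<Prod>y\<in>F. y ^ e y) \<in> clalg S" "f (\<Prod>y\<in>F. y ^ e y) = (\<Prod>y\<in>F. f y ^ e y)"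
    by auto
  have ak: "a ^ e a \<in> clalg S" by (rule clalg_pow[OF a])
  have "f (a ^ e a * (\<Prod>y\<in>F. y ^ e y)) = f (a ^ e a) * f (\<Prod>y\<in>F. y ^ e y)"
    using h ak IH(1) by (simp add: ring_hom_on_def)
  then show ?case using insert ak IH hom_pow[OF h a] by (simp add: clalg.mult)
qed

lemma allv_cv: "allv S \<subseteq> cluster_vars S"
  unfolding cluster_vars_def by (auto intro!: exI[of _ "[]"])

lemma mut_cv: "x \<in> exv S \<Longrightarrow> allv (mut x S) \<subseteq> cluster_vars S"
  unfolding cluster_vars_def by (auto intro!: exI[of _ "[x]"])

lemma neighbor:
  fixes S :: "'a::field_char_0 seed" and S' :: "'b::field_char_0 seed"
  assumes gS: "good S" and gS': "good S'" and rcm: "rooted_cluster_morphism S S' f"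
    and x0: "x0 \<in> exv S" and z: "f x0 \<in> exv S'" and y: "y \<in> allv S'" and ne: "mat S' y (f x0) \<noteq> 0"
  shows "y \<in> f ` allv S"
proof -
  have hom: "ring_hom_on (clalg S) (clalg S') f"
    and cm1: "\<forall>x\<in>exv S. f x \<in> exv S' \<union> \<int>"
    and cm2: "\<forall>x\<in>frv S. f x \<in> allv S' \<union> \<int>"
    and cm3: "\<forall>xs y. admissible xs S \<longrightarrow> admissible (map f xs) S' \<longrightarrow> y \<in> allv S \<longrightarrow>
        f (track xs S y) = (if f y \<in> \<int> then f y else track (map f xs) S' (f y))"
    using rcm by (auto simp: rooted_cluster_morphism_def)
  let ?n0 = "new_var S x0"
  define A1 where "A1 = {y\<in>allv S. mat S y x0 > 0}"
  define A2 where "A2 = {y\<in>allv S. mat S y x0 < 0}"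
  define e1 where "e1 y = nat (mat S y x0)" for y
  define e2 where "e2 y = nat (- mat S y x0)" for y
  have fin: "finite {y\<in>allv S. mat S y x0 \<noteq> 0}" using gS x0 by (simp add: good_def colfin_def)
  have f1: "finite A1" unfolding A1_def by (rule finite_subset[OF _ fin]) auto
  have f2: "finite A2" unfolding A2_def by (rule finite_subset[OF _ fin]) auto
  have x0a: "x0 \<in> allv S" using x0 by (simp add: allv_def)
  have x0nz: "x0 \<noteq> 0" using gS x0a var_nonzero by (auto simp: good_def)
  have e0: "x0 * ?n0 = (\<Prod>y\<in>A1. y ^ e1 y) + (\<Prod>y\<in>A2. y ^ e2 y)"
    using x0nz by (simp add: new_var_def A1_def A2_def e1_def e2_def)
  have Acl: "A1 \<subseteq> clalg S" "A2 \<subseteq> clalg S" using allv_cv[of S]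
    by (auto simp: A1_def A2_def intro: clalg.gen)
  have x0c: "x0 \<in> clalg S" using allv_cv[of S] x0a by (auto intro: clalg.gen)
  have n0c: "?n0 \<in> clalg S" using mut_cv[OF x0] by (auto intro: clalg.gen simp: allv_def)
  have P1: "(\<Prod>y\<in>A1. y ^ e1 y) \<in> clalg S" "f (\<Prod>y\<in>A1. y ^ e1 y) = (\<Prod>y\<in>A1. f y ^ e1 y)"
    using hom_prod[OF hom f1 Acl(1)] by auto
  have P2: "(\<Prod>y\<in>A2. y ^ e2 y) \<in> clalg S" "f (\<Prod>y\<in>A2. y ^ e2 y) = (\<Prod>y\<in>A2. f y ^ e2 y)"
    using hom_prod[OF hom f2 Acl(2)] by auto
  have fx0n: "f (x0 * ?n0) = f x0 * f ?n0" using hom x0c n0c by (simp add: ring_hom_on_def)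
  have fPQ: "f ((\<Prod>y\<in>A1. y ^ e1 y) + (\<Prod>y\<in>A2. y ^ e2 y)) = (\<Prod>y\<in>A1. f y ^ e1 y) + (\<Prod>y\<in>A2. f y ^ e2 y)"
    using hom P1 P2 by (simp add: ring_hom_on_def)
  have aiS': "alg_indep (allv S')" using gS' by (simp add: good_def)
  have fx0i: "f x0 \<notin> \<int>" using not_int_var[OF aiS'] z by (auto simp: allv_def)
  have "f (track [x0] S x0) = (if f x0 \<in> \<int> then f x0 else track (map f [x0]) S' (f x0))"
    using spec[OF spec[OF cm3, of "[x0]"], of x0] x0 z x0a by simp
  then have fn0: "f ?n0 = new_var S' (f x0)" using fx0i by simp
  obtain N1 N2 where N: "ks N1 = {y\<in>allv S'. mat S' y (f x0) > 0}" "ks N2 = {y\<in>allv S'. mat S' y (f x0) < 0}"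
    "f x0 * new_var S' (f x0) = mono_eval N1 + mono_eval N2" using newvar_rep[OF gS' z] by blast
  have inV: "\<forall>y\<in>allv S. f y \<in> allv S' \<union> \<int>" using cm1 cm2 by (auto simp: allv_def)
  obtain c1 m1 where m1: "ks m1 \<subseteq> allv S' \<inter> f ` A1" "(\<Prod>y\<in>A1. f y ^ e1 y) = of_int c1 * mono_eval m1"
    using img_rep[OF f1, of f "allv S'" e1] inV by (auto simp: A1_def)
  obtain c2 m2 where m2: "ks m2 \<subseteq> allv S' \<inter> f ` A2" "(\<Prod>y\<in>A2. f y ^ e2 y) = of_int c2 * mono_eval m2"
    using img_rep[OF f2, of f "allv S'" e2] inV by (auto simp: A2_def)
  have EQ: "mono_eval N1 + mono_eval N2 = of_int c1 * mono_eval m1 + of_int c2 * mono_eval m2"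
    using N(3) fn0 fx0n fPQ e0 m1(2) m2(2) by simp
  have sub: "ks m1 \<union> ks m2 \<subseteq> f ` allv S" using m1(1) m2(1) by (auto simp: A1_def A2_def)
  have NV: "ks N1 \<subseteq> allv S'" "ks N2 \<subseteq> allv S'" "ks m1 \<subseteq> allv S'" "ks m2 \<subseteq> allv S'"
    using N m1 m2 by auto
  have dj: "ks N1 \<inter> ks N2 = {}" using N by auto
  show ?thesis
  proof (cases "mat S' y (f x0) > 0")
    case True
    then have "y \<in> ks N1" using N y by simp
    then show ?thesis using two_mono[OF aiS' NV dj EQ] sub by blast
  next
    case False
    then have "y \<in> ks N2" using N y ne by simp
    moreover have "mono_eval N2 + mono_eval N1 = of_int c1 * mono_eval m1 + of_int c2 * mono_eval m2"
      using EQ by (simp add: add.commute)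
    moreover have "ks N2 \<inter> ks N1 = {}" using dj by auto
    ultimately show ?thesis using two_mono[OF aiS' NV(2,1,3,4)] sub by blast
  qed
qed


theorem mainTheorem5:
  fixes S :: "'a::field_char_0 seed" and S' :: "'b::field_char_0 seed" and f :: "'a \<Rightarrow> 'b"
  assumes "is_seed S" and "is_seed S'"
    and "rooted_cluster_morphism S S' f"
  shows "is_seed (image_seed S S' f) \<and>
         rooted_cluster_morphism (image_seed S S' f) S' id \<and>
         inj_on id (clalg (image_seed S S' f)) \<and>
         (ideal_morphism S S' f \<longrightarrow>
         (\<exists>g. rooted_cluster_morphism S (image_seed S S' f) g \<and>
             g ` clalg S = clalg (image_seed S S' f) \<and>
             (\<forall>a\<in>clalg S. f a = id (g a))))"
proof -
  note sS = assms(1) and sS' = assms(2) and rcm = assms(3)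
  have gS: "good S" using seed_good[OF sS] .
  have gS': "good S'" using seed_good[OF sS'] .
  have hom: "ring_hom_on (clalg S) (clalg S') f"
    and cm1: "\<forall>x\<in>exv S. f x \<in> exv S' \<union> \<int>"
    and cm2: "\<forall>x\<in>frv S. f x \<in> allv S' \<union> \<int>"
    and cm3: "\<forall>xs y. admissible xs S \<longrightarrow> admissible (map f xs) S' \<longrightarrow> y \<in> allv S \<longrightarrow>
        f (track xs S y) = (if f y \<in> \<int> then f y else track (map f xs) S' (f y))"
    using rcm by (auto simp: rooted_cluster_morphism_def)
  define I where "I = image_seed S S' f"
  define E where "E = exv S' \<inter> f ` exv S"
  define X where "X = allv S' \<inter> f ` allv S"
  have EX: "E \<subseteq> X" by (auto simp: E_def X_def allv_def)
  have I: "exv I = E" "frv I = X - E" "mat I = (\<lambda>y z. if y \<in> X \<and> z \<in> E then mat S' y z else 0)"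
    by (simp_all add: I_def image_seed_def E_def X_def Let_def)
  have aI: "allv I = X" using EX by (auto simp: allv_def I)
  have ES': "E \<subseteq> exv S'" by (auto simp: E_def)
  have XS': "X \<subseteq> allv S'" by (auto simp: X_def)
  have seedI: "is_seed I"
  proof -
    have c1: "countable E" using sS' ES' by (auto simp: is_seed_def intro: countable_subset)
    have "countable (allv S')" using sS' by (simp add: is_seed_def allv_def)
    then have c2: "countable (X - E)" using XS' by (auto intro: countable_subset)
    have ai: "alg_indep X" using gS' XS' alg_indep_mono by (auto simp: good_def)
    have lf: "locally_finite I"
      unfolding locally_finite_def
    proof (intro conjI ballI)
      fix z assume z: "z \<in> exv I"
      then have "z \<in> exv S'" using ES' I by auto
      then have "finite {y\<in>allv S'. mat S' y z \<noteq> 0}" using sS' by (simp add: is_seed_def locally_finite_def)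
      moreover have "{y\<in>allv I. mat I y z \<noteq> 0} \<subseteq> {y\<in>allv S'. mat S' y z \<noteq> 0}"
        using aI XS' I by auto
      ultimately show "finite {y\<in>allv I. mat I y z \<noteq> 0}" by (rule finite_subset[rotated])
    next
      fix y assume y: "y \<in> allv I"
      then have "y \<in> allv S'" using XS' aI by auto
      then have "finite {z\<in>exv S'. mat S' y z \<noteq> 0}" using sS' by (simp add: is_seed_def locally_finite_def)
      moreover have "{z\<in>exv I. mat I y z \<noteq> 0} \<subseteq> {z\<in>exv S'. mat S' y z \<noteq> 0}"
        using ES' I by auto
      ultimately show "finite {z\<in>exv I. mat I y z \<noteq> 0}" by (rule finite_subset[rotated])
    qed
    have sk: "skew_symmetrizable I"
    proof -
      obtain d where d: "\<forall>x\<in>exv S'. d x > 0" "\<forall>y\<in>exv S'. \<forall>z\<in>exv S'. d y * mat S' y z = - (d z * mat S' z y)"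
        using sS' unfolding is_seed_def skew_symmetrizable_def by blast
      show ?thesis unfolding skew_symmetrizable_def
        by (rule exI[of _ d]) (use d ES' EX I in auto)
    qed
    show ?thesis unfolding is_seed_def using c1 c2 ai lf sk aI by (simp add: I)
  qed
  have R: "Rel I S'"
    unfolding Rel_def
  proof (intro conjI ballI impI)
    show "exv I \<subseteq> exv S'" using ES' I by simp
    show "frv I \<subseteq> allv S'" using XS' I by auto
    show "exv I \<inter> frv I = {}" using I by auto
  next
    fix y z assume "y \<in> allv I" "z \<in> exv I"
    then show "mat I y z = mat S' y z" using aI I by simp
  next
    fix z y assume z: "z \<in> exv I" and y: "y \<in> allv S'" and ne: "mat S' y z \<noteq> 0"
    from z obtain x0 where x0: "x0 \<in> exv S" "z = f x0" "f x0 \<in> exv S'" using I by (auto simp: E_def)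
    have "y \<in> f ` allv S" using neighbor[OF gS gS' rcm x0(1) x0(3) y] ne x0(2) by simp
    then show "y \<in> allv I" using y aI by (simp add: X_def)
  qed
  have clI: "clalg I \<subseteq> clalg S'" by (rule Rel_clalg[OF R gS'])
  have trI: "admissible xs S' \<and> (\<forall>y\<in>allv I. track xs I y = track xs S' y)" if "admissible xs I" for xs
    using Rel_seq[OF R gS' that] by simp
  have rcmI: "rooted_cluster_morphism I S' id"
    unfolding rooted_cluster_morphism_def
  proof (intro conjI allI impI ballI)
    show "ring_hom_on (clalg I) (clalg S') id" using clI by (simp add: ring_hom_on_def)
  next
    fix x assume "x \<in> exv I" then show "id x \<in> exv S' \<union> \<int>" using ES' I by auto
  next
    fix x assume "x \<in> frv I" then show "id x \<in> allv S' \<union> \<int>" using XS' I by auto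
  next
    fix xs y assume ad: "admissible xs I" and "admissible (map id xs) S'" and y: "y \<in> allv I"
    have yn: "y \<notin> \<int>" using not_int_var[of "allv S'" y] gS' y aI XS' by (auto simp: good_def)
    show "id (track xs I y) = (if id y \<in> \<int> then id y else track (map id xs) S' (id y))"
      using trI[OF ad] y yn by simp
  qed
  have part2: "ideal_morphism S S' f \<longrightarrow>
         (\<exists>g. rooted_cluster_morphism S I g \<and> g ` clalg S = clalg I \<and> (\<forall>a\<in>clalg S. f a = id (g a)))"
  proof
    assume "ideal_morphism S S' f"
    then have id: "clalg I = f ` clalg S" by (simp add: ideal_morphism_def I_def)
    have "rooted_cluster_morphism S I f"
      unfolding rooted_cluster_morphism_def
    proof (intro conjI allI impI ballI)
      show "ring_hom_on (clalg S) (clalg I) f" using hom id by (simp add: ring_hom_on_def)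
    next
      fix x assume "x \<in> exv S" then show "f x \<in> exv I \<union> \<int>" using cm1 I by (auto simp: E_def)
    next
      fix x assume x: "x \<in> frv S"
      then have "f x \<in> allv S' \<union> \<int>" using cm2 by auto
      then show "f x \<in> allv I \<union> \<int>" using x aI by (auto simp: X_def allv_def)
    next
      fix xs y assume ad: "admissible xs S" and adI: "admissible (map f xs) I" and y: "y \<in> allv S"
      have tr: "admissible (map f xs) S'" "\<forall>y\<in>allv I. track (map f xs) I y = track (map f xs) S' y"
        using trI[OF adI] by auto
      have e: "f (track xs S y) = (if f y \<in> \<int> then f y else track (map f xs) S' (f y))"
        using spec[OF spec[OF cm3, of xs], of y] ad tr(1) y by simp
      show "f (track xs S y) = (if f y \<in> \<int> then f y else track (map f xs) I (f y))"
      proof (cases "f y \<in> \<int>")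
        case True then show ?thesis using e by simp
      next
        case False
        then have "f y \<in> allv S'" using y cm1 cm2 by (auto simp: allv_def)
        then have "f y \<in> allv I" using y aI by (simp add: X_def)
        then show ?thesis using e False tr(2) by simp
      qed
    qed
    then show "\<exists>g. rooted_cluster_morphism S I g \<and> g ` clalg S = clalg I \<and> (\<forall>a\<in>clalg S. f a = id (g a))"
      using id by auto
  qed
  show ?thesis using seedI rcmI part2 by (simp add: I_def[symmetric])
qed

end
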